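(* Let $c>0$ and $\lambda>0$ be constants, let $U\subset(0,T)\times\mathbb{R}^2$ be open, and for each $\varepsilon>0$ let $(\rho^\varepsilon,\Omega^\varepsilon)$, with $\rho^\varepsilon:U\to(0,\infty)$ and $\Omega^\varepsilon:U\to\mathbb{R}^2$, be a $C^1$ solution of the relaxation system $$\partial_t\rho^\varepsilon+\nabla_x\cdot(\rho^\varepsilon\Omega^\varepsilon)=0,\qquad \partial_t(\rho^\varepsilon\Omega^\varepsilon)+c\,\nabla_x\cdot(\rho^\varepsilon\Omega^\varepsilon\otimes\Omega^\varepsilon)+\lambda\nabla_x\rho^\varepsilon=\frac{\rho^\varepsilon}{\varepsilon}\,(1-|\Omega^\varepsilon|^2)\,\Omega^\varepsilon .$$ Suppose that, as $\varepsilon\to0$, $\rho^\varepsilon\to\rho^0$ and $\Omega^\varepsilon\to\Omega^0$ in $C^1_{loc}(U)$ (i.e. the functions and their first derivatives converge locally uniformly), where $\rho^0>0$ on $U$ and $\Omega^0$ vanishes nowhere on $U$. Then $|\Omega^0|=1$ on $U$ and $(\rho^0,\Omega^0)$ solves the macroscopic Vicsek system $$\partial_t\rho^0+\nabla_x\cdot(\rho^0\Omega^0)=0,\qquad \rho^0\big(\partial_t\Omega^0+c\,(\Omega^0\cdot\nabla_x)\Omega^0\big)+\lambda\,(\mathrm{Id}-\Omega^0\otimes\Omega^0)\nabla_x\rho^0=0 .$$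
   Context: $\mathrm{Id}$ is the $2\times2$ identity matrix, $a\otimes b$ the tensor product of vectors, and $\nabla_x\cdot(\rho\Omega\otimes\Omega)$ is the vector with components $\sum_j\partial_{x_j}(\rho\Omega_i\Omega_j)$. *)

theory Defs
  imports "HOL-Analysis.Analysis"
begin

type_synonym pt = "real \<times> (real^2)"

definition pd :: "(pt \<Rightarrow> 'a::real_normed_vector) \<Rightarrow> pt \<Rightarrow> pt \<Rightarrow> 'a" where
  "pd f p v = frechet_derivative f (at p) v"

definition dt :: "(pt \<Rightarrow> 'a::real_normed_vector) \<Rightarrow> pt \<Rightarrow> 'a" where
  "dt f p = pd f p (1, 0)"

definition dx :: "2 \<Rightarrow> (pt \<Rightarrow> 'a::real_normed_vector) \<Rightarrow> pt \<Rightarrow> 'a" where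
  "dx j f p = pd f p (0, axis j 1)"

definition C1_on :: "pt set \<Rightarrow> (pt \<Rightarrow> 'a::real_normed_vector) \<Rightarrow> bool" where
  "C1_on U f \<longleftrightarrow> (\<forall>p\<in>U. f differentiable (at p)) \<and>
                  (\<forall>v. continuous_on U (\<lambda>p. pd f p v))"

definition C1loc_conv :: "pt set \<Rightarrow> (real \<Rightarrow> pt \<Rightarrow> 'a::real_normed_vector) \<Rightarrow> (pt \<Rightarrow> 'a) \<Rightarrow> bool" where
  "C1loc_conv U f g \<longleftrightarrow> C1_on U g \<and>
     (\<forall>K. compact K \<and> K \<subseteq> U \<longrightarrow>
        uniform_limit K f g (at_right 0) \<and>
        (\<forall>v. uniform_limit K (\<lambda>e p. pd (f e) p v) (\<lambda>p. pd g p v) (at_right 0)))"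

end

theory Submission
  imports Defs
begin

lemma pd_has: "f differentiable (at p) \<Longrightarrow> (f has_derivative pd f p) (at p)"
  unfolding pd_def[abs_def] using frechet_derivative_works by (metis)

lemma pd_eq: "(f has_derivative f') (at p) \<Longrightarrow> pd f p v = f' v"
  unfolding pd_def by (metis frechet_derivative_at)

lemma pd_nth:
  assumes "(f::pt \<Rightarrow> real^2) differentiable (at p)"
  shows "pd (\<lambda>q. f q $ i) p v = pd f p v $ i"
    and "(\<lambda>q. f q $ i) differentiable (at p)"
proof -
  have "((\<lambda>q. f q $ i) has_derivative (\<lambda>v. pd f p v $ i)) (at p)"
    using bounded_linear.has_derivative[OF bounded_linear_vec_nth pd_has[OF assms]] .
  then show "pd (\<lambda>q. f q $ i) p v = pd f p v $ i" "(\<lambda>q. f q $ i) differentiable (at p)"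
    by (auto intro: pd_eq simp: differentiable_def)
qed

lemma pd_mult:
  assumes "(f::pt \<Rightarrow> real) differentiable (at p)" "g differentiable (at p)"
  shows "pd (\<lambda>q. f q * g q) p v = f p * pd g p v + pd f p v * g p"
    and "(\<lambda>q. f q * g q) differentiable (at p)"
proof -
  have "((\<lambda>q. f q * g q) has_derivative (\<lambda>v. f p * pd g p v + pd f p v * g p)) (at p)"
    using has_derivative_mult[OF pd_has[OF assms(1)] pd_has[OF assms(2)]] .
  then show "pd (\<lambda>q. f q * g q) p v = f p * pd g p v + pd f p v * g p" "(\<lambda>q. f q * g q) differentiable (at p)"
    by (auto intro: pd_eq simp: differentiable_def)
qed

lemma alg:
  fixes r Rt R1 R2 u1 u2 Wt1 Wt2 W11 W12 W21 W22 c lam A1 A2 :: real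
  assumes "u1*u1+u2*u2 = 1" "u1*Wt1+u2*Wt2 = 0" "u1*W11+u2*W12=0" "u1*W21+u2*W22=0"
   "Rt + (r*W11 + R1*u1 + (r*W22+R2*u2)) = 0"
   "A1 = (r*Wt1 + Rt*u1) + c*((r*u1*W11 + (r*W11+R1*u1)*u1) + (r*u1*W22 + (r*W21+R2*u1)*u2)) + lam*R1"
   "A2 = (r*Wt2 + Rt*u2) + c*((r*u2*W11 + (r*W12+R1*u2)*u1) + (r*u2*W22 + (r*W22+R2*u2)*u2)) + lam*R2"
   "A1 = u1 * (u1*A1+u2*A2)"
  shows "r*(Wt1 + c*(u1*W11+u2*W21)) + lam*(R1 - u1*(u1*R1+u2*R2)) = 0"
  using assms by algebra
lemma alg2:
  fixes r Rt R1 R2 u1 u2 Wt1 Wt2 W11 W12 W21 W22 c lam A1 A2 :: real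
  assumes "u1*u1+u2*u2 = 1" "u1*Wt1+u2*Wt2 = 0" "u1*W11+u2*W12=0" "u1*W21+u2*W22=0"
   "Rt + (r*W11 + R1*u1 + (r*W22+R2*u2)) = 0"
   "A1 = (r*Wt1 + Rt*u1) + c*((r*u1*W11 + (r*W11+R1*u1)*u1) + (r*u1*W22 + (r*W21+R2*u1)*u2)) + lam*R1"
   "A2 = (r*Wt2 + Rt*u2) + c*((r*u2*W11 + (r*W12+R1*u2)*u1) + (r*u2*W22 + (r*W22+R2*u2)*u2)) + lam*R2"
   "A2 = u2 * (u1*A1+u2*A2)"
  shows "r*(Wt2 + c*(u1*W12+u2*W22)) + lam*(R2 - u2*(u1*R1+u2*R2)) = 0"
  using assms by algebra

definition massE :: "real \<Rightarrow> (pt \<Rightarrow> real) \<Rightarrow> real^2 \<Rightarrow> (pt \<Rightarrow> real^2) \<Rightarrow> real" where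
  "massE r Rf w Wf = Rf (1,0) + (\<Sum>j\<in>UNIV. r * Wf (0,axis j 1) $ j + Rf (0,axis j 1) * w $ j)"

definition momE :: "real \<Rightarrow> real \<Rightarrow> real \<Rightarrow> (pt \<Rightarrow> real) \<Rightarrow> real^2 \<Rightarrow> (pt \<Rightarrow> real^2) \<Rightarrow> 2 \<Rightarrow> real" where
  "momE c lam r Rf w Wf i = (r * Wf (1,0) $ i + Rf (1,0) * w $ i)
     + c * (\<Sum>j\<in>UNIV. r * w$i * Wf (0,axis j 1) $ j + (r * Wf (0,axis j 1) $ i + Rf (0,axis j 1) * w $ i) * w $ j)
     + lam * Rf (0, axis i 1)"

lemma mass_exp:
  assumes "(f::pt\<Rightarrow>real) differentiable (at p)" "(g::pt\<Rightarrow>real^2) differentiable (at p)"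
  shows "dt f p + (\<Sum>j\<in>UNIV. dx j (\<lambda>q. f q * g q $ j) p) = massE (f p) (pd f p) (g p) (pd g p)"
  unfolding massE_def dt_def dx_def
  using assms by (simp add: pd_mult pd_nth)

lemma mom_exp:
  assumes "(f::pt\<Rightarrow>real) differentiable (at p)" "(g::pt\<Rightarrow>real^2) differentiable (at p)"
  shows "dt (\<lambda>q. f q * g q $ i) p
        + c * (\<Sum>j\<in>UNIV. dx j (\<lambda>q. f q * g q $ i * g q $ j) p)
        + lam * dx i f p = momE c lam (f p) (pd f p) (g p) (pd g p) i"
  unfolding momE_def dt_def dx_def
  using assms by (simp add: pd_mult pd_nth)

lemma ev_pos: "eventually (\<lambda>e. e > 0) (at_right (0::real))"
  by (simp add: eventually_at_right_less)

theorem proposition3p1: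
  fixes c lam T :: real
    and U :: "pt set"
    and \<rho> :: "real \<Rightarrow> pt \<Rightarrow> real" and \<Omega> :: "real \<Rightarrow> pt \<Rightarrow> real^2"
    and \<rho>0 :: "pt \<Rightarrow> real" and \<Omega>0 :: "pt \<Rightarrow> real^2"
  assumes c: "c > 0" and lam: "lam > 0"
    and U: "open U" "U \<subseteq> {0<..<T} \<times> UNIV"
    and pos: "\<And>e p. e > 0 \<Longrightarrow> p \<in> U \<Longrightarrow> \<rho> e p > 0"
    and C1: "\<And>e. e > 0 \<Longrightarrow> C1_on U (\<rho> e) \<and> C1_on U (\<Omega> e)"
    and mass: "\<And>e p. e > 0 \<Longrightarrow> p \<in> U \<Longrightarrow>
        dt (\<rho> e) p + (\<Sum>j\<in>UNIV. dx j (\<lambda>q. \<rho> e q * \<Omega> e q $ j) p) = 0"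
    and mom: "\<And>e p i. e > 0 \<Longrightarrow> p \<in> U \<Longrightarrow>
        dt (\<lambda>q. \<rho> e q * \<Omega> e q $ i) p
        + c * (\<Sum>j\<in>UNIV. dx j (\<lambda>q. \<rho> e q * \<Omega> e q $ i * \<Omega> e q $ j) p)
        + lam * dx i (\<rho> e) p
        = \<rho> e p / e * (1 - (norm (\<Omega> e p))\<^sup>2) * \<Omega> e p $ i"
    and convr: "C1loc_conv U \<rho> \<rho>0"
    and convO: "C1loc_conv U \<Omega> \<Omega>0"
    and pos0: "\<And>p. p \<in> U \<Longrightarrow> \<rho>0 p > 0"
    and nz0: "\<And>p. p \<in> U \<Longrightarrow> \<Omega>0 p \<noteq> 0"
  shows "(\<forall>p\<in>U. norm (\<Omega>0 p) = 1)
    \<and> (\<forall>p\<in>U. dt \<rho>0 p + (\<Sum>j\<in>UNIV. dx j (\<lambda>q. \<rho>0 q * \<Omega>0 q $ j) p) = 0)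
    \<and> (\<forall>p\<in>U. \<forall>i.
        \<rho>0 p * (dt (\<lambda>q. \<Omega>0 q $ i) p
                 + c * (\<Sum>j\<in>UNIV. \<Omega>0 p $ j * dx j (\<lambda>q. \<Omega>0 q $ i) p))
        + lam * (dx i \<rho>0 p - \<Omega>0 p $ i * (\<Sum>j\<in>UNIV. \<Omega>0 p $ j * dx j \<rho>0 p)) = 0)"
proof -
  let ?F = "at_right (0::real)"
  have Fnt: "?F \<noteq> bot" by simp
  have dr: "\<And>e p. e>0 \<Longrightarrow> p\<in>U \<Longrightarrow> \<rho> e differentiable (at p)"
    using C1 unfolding C1_on_def by blast
  have dO: "\<And>e p. e>0 \<Longrightarrow> p\<in>U \<Longrightarrow> \<Omega> e differentiable (at p)"
    using C1 unfolding C1_on_def by blast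
  have d0r: "\<And>p. p\<in>U \<Longrightarrow> \<rho>0 differentiable (at p)"
    using convr unfolding C1loc_conv_def C1_on_def by blast
  have d0O: "\<And>p. p\<in>U \<Longrightarrow> \<Omega>0 differentiable (at p)"
    using convO unfolding C1loc_conv_def C1_on_def by blast
  have step1: "norm (\<Omega>0 p) = 1 \<and> massE (\<rho>0 p) (pd \<rho>0 p) (\<Omega>0 p) (pd \<Omega>0 p) = 0 \<and>
     (\<forall>i. momE c lam (\<rho>0 p) (pd \<rho>0 p) (\<Omega>0 p) (pd \<Omega>0 p) i * (norm (\<Omega>0 p))\<^sup>2
       - \<Omega>0 p $ i * (\<Sum>k\<in>UNIV. \<Omega>0 p $ k * momE c lam (\<rho>0 p) (pd \<rho>0 p) (\<Omega>0 p) (pd \<Omega>0 p) k) = 0)"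
    if p: "p \<in> U" for p
  proof -
    have K: "compact {p}" "{p} \<subseteq> U" using p by auto
    have lr: "((\<lambda>e. \<rho> e p) \<longlongrightarrow> \<rho>0 p) ?F"
    proof -
      have "uniform_limit {p} \<rho> \<rho>0 ?F" using convr K unfolding C1loc_conv_def by blast
      from tendsto_uniform_limitI[OF this singletonI] show ?thesis .
    qed
    have lR: "((\<lambda>e. pd (\<rho> e) p v) \<longlongrightarrow> pd \<rho>0 p v) ?F" for v
    proof -
      have "uniform_limit {p} (\<lambda>e p. pd (\<rho> e) p v) (\<lambda>p. pd \<rho>0 p v) ?F" using convr K unfolding C1loc_conv_def by blast
      from tendsto_uniform_limitI[OF this singletonI] show ?thesis .
    qed
    have lw: "((\<lambda>e. \<Omega> e p) \<longlongrightarrow> \<Omega>0 p) ?F"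
    proof -
      have "uniform_limit {p} \<Omega> \<Omega>0 ?F" using convO K unfolding C1loc_conv_def by blast
      from tendsto_uniform_limitI[OF this singletonI] show ?thesis .
    qed
    have lW: "((\<lambda>e. pd (\<Omega> e) p v) \<longlongrightarrow> pd \<Omega>0 p v) ?F" for v
    proof -
      have "uniform_limit {p} (\<lambda>e p. pd (\<Omega> e) p v) (\<lambda>p. pd \<Omega>0 p v) ?F" using convO K unfolding C1loc_conv_def by blast
      from tendsto_uniform_limitI[OF this singletonI] show ?thesis .
    qed
    have lM: "((\<lambda>e. massE (\<rho> e p) (pd (\<rho> e) p) (\<Omega> e p) (pd (\<Omega> e) p))
        \<longlongrightarrow> massE (\<rho>0 p) (pd \<rho>0 p) (\<Omega>0 p) (pd \<Omega>0 p)) ?F"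
      unfolding massE_def by (intro tendsto_intros lr lR lw lW)
    have lA: "((\<lambda>e. momE c lam (\<rho> e p) (pd (\<rho> e) p) (\<Omega> e p) (pd (\<Omega> e) p) i)
        \<longlongrightarrow> momE c lam (\<rho>0 p) (pd \<rho>0 p) (\<Omega>0 p) (pd \<Omega>0 p) i) ?F" for i
      unfolding momE_def by (intro tendsto_intros lr lR lw lW)
    define A where "A e i = momE c lam (\<rho> e p) (pd (\<rho> e) p) (\<Omega> e p) (pd (\<Omega> e) p) i" for e i
    define A0 where "A0 i = momE c lam (\<rho>0 p) (pd \<rho>0 p) (\<Omega>0 p) (pd \<Omega>0 p) i" for i
    have Aeq: "A e i = \<rho> e p / e * (1 - (norm (\<Omega> e p))\<^sup>2) * \<Omega> e p $ i" if "e > 0" for e i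
      unfolding A_def using trans[OF sym[OF mom_exp[OF dr[OF that p] dO[OF that p], of i c lam]] mom[OF that p, of i]] .
    have massev: "\<forall>\<^sub>F e in ?F. massE (\<rho> e p) (pd (\<rho> e) p) (\<Omega> e p) (pd (\<Omega> e) p) = 0"
      using ev_pos
    proof eventually_elim
      case (elim e)
      show ?case using trans[OF sym[OF mass_exp[OF dr[OF elim p] dO[OF elim p]]] mass[OF elim p]] .
    qed
    have m0: "massE (\<rho>0 p) (pd \<rho>0 p) (\<Omega>0 p) (pd \<Omega>0 p) = 0"
      using Lim_transform_eventually[OF lM massev] Fnt tendsto_const_iff by metis
    have z: "\<rho>0 p * (1 - (norm (\<Omega>0 p))\<^sup>2) * \<Omega>0 p $ i = 0" for i
    proof -
      have l1: "((\<lambda>e. e * A e i) \<longlongrightarrow> 0 * A0 i) ?F"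
        unfolding A_def A0_def by (intro tendsto_intros lA)
      have ev: "\<forall>\<^sub>F e in ?F. e * A e i = \<rho> e p * (1 - (norm (\<Omega> e p))\<^sup>2) * \<Omega> e p $ i"
        using ev_pos by eventually_elim (simp add: Aeq)
      have l2: "((\<lambda>e. \<rho> e p * (1 - (norm (\<Omega> e p))\<^sup>2) * \<Omega> e p $ i) \<longlongrightarrow> 0) ?F"
        using Lim_transform_eventually[OF l1 ev] by simp
      have l3: "((\<lambda>e. \<rho> e p * (1 - (norm (\<Omega> e p))\<^sup>2) * \<Omega> e p $ i) \<longlongrightarrow>
          \<rho>0 p * (1 - (norm (\<Omega>0 p))\<^sup>2) * \<Omega>0 p $ i) ?F"
        by (intro tendsto_intros lr lw)
      show ?thesis using tendsto_unique[OF Fnt l3 l2] .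
    qed
    obtain i where "\<Omega>0 p $ i \<noteq> 0" using nz0[OF p] by (metis vec_eq_iff zero_index)
    then have "(norm (\<Omega>0 p))\<^sup>2 = 1" using z[of i] pos0[OF p] by simp
    then have n1: "norm (\<Omega>0 p) = 1" using norm_ge_zero[of "\<Omega>0 p"] by (auto simp: power2_eq_1_iff)
    have orth: "A0 i * (norm (\<Omega>0 p))\<^sup>2 - \<Omega>0 p $ i * (\<Sum>k\<in>UNIV. \<Omega>0 p $ k * A0 k) = 0" for i
    proof -
      have l1: "((\<lambda>e. A e i * (norm (\<Omega> e p))\<^sup>2 - \<Omega> e p $ i * (\<Sum>k\<in>UNIV. \<Omega> e p $ k * A e k))
         \<longlongrightarrow> A0 i * (norm (\<Omega>0 p))\<^sup>2 - \<Omega>0 p $ i * (\<Sum>k\<in>UNIV. \<Omega>0 p $ k * A0 k)) ?F"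
        unfolding A_def A0_def by (intro tendsto_intros lA lw)
      have ev: "\<forall>\<^sub>F e in ?F. A e i * (norm (\<Omega> e p))\<^sup>2 - \<Omega> e p $ i * (\<Sum>k\<in>UNIV. \<Omega> e p $ k * A e k) = 0"
        using ev_pos
      proof eventually_elim
        case (elim e)
        define mu where "mu = \<rho> e p / e * (1 - (norm (\<Omega> e p))\<^sup>2)"
        have "A e k = mu * \<Omega> e p $ k" for k using Aeq[OF elim] mu_def by simp
        moreover have "(norm (\<Omega> e p))\<^sup>2 = (\<Sum>k\<in>UNIV. \<Omega> e p $ k * \<Omega> e p $ k)"
          by (simp add: power2_norm_eq_inner inner_vec_def)
        ultimately show ?case by (simp add: sum_2 algebra_simps)
      qed
      show ?thesis using Lim_transform_eventually[OF l1 ev] Fnt tendsto_const_iff by metis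
    qed
    show ?thesis using n1 m0 orth unfolding A0_def by blast
  qed
  have orthD: "(\<Sum>k\<in>UNIV. \<Omega>0 p $ k * pd \<Omega>0 p v $ k) = 0" if p: "p \<in> U" for p v
  proof -
    have h1: "((\<lambda>q. \<Omega>0 q \<bullet> \<Omega>0 q) has_derivative (\<lambda>v. \<Omega>0 p \<bullet> pd \<Omega>0 p v + pd \<Omega>0 p v \<bullet> \<Omega>0 p)) (at p)"
      using has_derivative_inner[OF pd_has[OF d0O[OF p]] pd_has[OF d0O[OF p]]] .
    have "((\<lambda>q. 1::real) has_derivative (\<lambda>v. 0)) (at p)" by simp
    then have h2: "((\<lambda>q. \<Omega>0 q \<bullet> \<Omega>0 q) has_derivative (\<lambda>v. 0)) (at p)"
      by (rule has_derivative_transform_within_open[OF _ U(1) p])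
         (metis step1 power2_norm_eq_inner power_one)
    have "(\<lambda>v. \<Omega>0 p \<bullet> pd \<Omega>0 p v + pd \<Omega>0 p v \<bullet> \<Omega>0 p) = (\<lambda>v. 0)"
      using has_derivative_unique[OF h1 h2] .
    then have "\<Omega>0 p \<bullet> pd \<Omega>0 p v + pd \<Omega>0 p v \<bullet> \<Omega>0 p = 0" by metis
    then show ?thesis by (simp add: inner_vec_def sum_2 algebra_simps)
  qed
  show ?thesis
  proof (intro conjI ballI allI)
    fix p assume p: "p \<in> U"
    show "norm (\<Omega>0 p) = 1" using conjunct1[OF step1[OF p]] .
    show "dt \<rho>0 p + (\<Sum>j\<in>UNIV. dx j (\<lambda>q. \<rho>0 q * \<Omega>0 q $ j) p) = 0"
      unfolding mass_exp[OF d0r[OF p] d0O[OF p]] using conjunct1[OF conjunct2[OF step1[OF p]]] .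
  next
    fix p i assume p: "p \<in> U"
    have S: "norm (\<Omega>0 p) = 1" "massE (\<rho>0 p) (pd \<rho>0 p) (\<Omega>0 p) (pd \<Omega>0 p) = 0"
      "\<And>i. momE c lam (\<rho>0 p) (pd \<rho>0 p) (\<Omega>0 p) (pd \<Omega>0 p) i
       = \<Omega>0 p $ i * (\<Sum>k\<in>UNIV. \<Omega>0 p $ k * momE c lam (\<rho>0 p) (pd \<rho>0 p) (\<Omega>0 p) (pd \<Omega>0 p) k)"
    proof -
      have st1: "norm (\<Omega>0 p) = 1" by (rule conjunct1[OF step1[OF p]])
      have st2: "massE (\<rho>0 p) (pd \<rho>0 p) (\<Omega>0 p) (pd \<Omega>0 p) = 0"
        by (rule conjunct1[OF conjunct2[OF step1[OF p]]])
      have st3: "momE c lam (\<rho>0 p) (pd \<rho>0 p) (\<Omega>0 p) (pd \<Omega>0 p) i * (norm (\<Omega>0 p))\<^sup>2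
       - \<Omega>0 p $ i * (\<Sum>k\<in>UNIV. \<Omega>0 p $ k * momE c lam (\<rho>0 p) (pd \<rho>0 p) (\<Omega>0 p) (pd \<Omega>0 p) k) = 0" for i
        by (rule spec[OF conjunct2[OF conjunct2[OF step1[OF p]]]])
      show "norm (\<Omega>0 p) = 1" by (rule st1)
      show "massE (\<rho>0 p) (pd \<rho>0 p) (\<Omega>0 p) (pd \<Omega>0 p) = 0" by (rule st2)
      show "momE c lam (\<rho>0 p) (pd \<rho>0 p) (\<Omega>0 p) (pd \<Omega>0 p) i
       = \<Omega>0 p $ i * (\<Sum>k\<in>UNIV. \<Omega>0 p $ k * momE c lam (\<rho>0 p) (pd \<rho>0 p) (\<Omega>0 p) (pd \<Omega>0 p) k)" for i
        using st3[of i] unfolding st1 power_one mult_1_right by linarith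
    qed
    have nn: "\<Omega>0 p $ 1 * \<Omega>0 p $ 1 + \<Omega>0 p $ 2 * \<Omega>0 p $ 2 = 1"
    proof -
      have "(norm (\<Omega>0 p))\<^sup>2 = (\<Sum>k\<in>UNIV. \<Omega>0 p $ k * \<Omega>0 p $ k)"
        by (simp add: power2_norm_eq_inner inner_vec_def)
      then show ?thesis using S(1) by (simp add: sum_2)
    qed
    have o: "\<And>v. \<Omega>0 p $ 1 * pd \<Omega>0 p v $ 1 + \<Omega>0 p $ 2 * pd \<Omega>0 p v $ 2 = 0"
      using orthD[OF p] by (simp add: sum_2)
    have dtO: "dt (\<lambda>q. \<Omega>0 q $ k) p = pd \<Omega>0 p (1,0) $ k" for k
      unfolding dt_def by (rule pd_nth(1)[OF d0O[OF p]])
    have dxO: "dx j (\<lambda>q. \<Omega>0 q $ k) p = pd \<Omega>0 p (0, axis j 1) $ k" for j k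
      unfolding dx_def by (rule pd_nth(1)[OF d0O[OF p]])
    have dxr: "dx j \<rho>0 p = pd \<rho>0 p (0, axis j 1)" for j by (simp add: dx_def)
    have M: "massE (\<rho>0 p) (pd \<rho>0 p) (\<Omega>0 p) (pd \<Omega>0 p) = 0" by (rule S(2))
    have A1: "momE c lam (\<rho>0 p) (pd \<rho>0 p) (\<Omega>0 p) (pd \<Omega>0 p) 1
       = \<Omega>0 p $ 1 * (\<Omega>0 p $ 1 * momE c lam (\<rho>0 p) (pd \<rho>0 p) (\<Omega>0 p) (pd \<Omega>0 p) 1 + \<Omega>0 p $ 2 * momE c lam (\<rho>0 p) (pd \<rho>0 p) (\<Omega>0 p) (pd \<Omega>0 p) 2)"
      using S(3)[of 1] by (simp only: sum_2)
    have A2: "momE c lam (\<rho>0 p) (pd \<rho>0 p) (\<Omega>0 p) (pd \<Omega>0 p) 2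
       = \<Omega>0 p $ 2 * (\<Omega>0 p $ 1 * momE c lam (\<rho>0 p) (pd \<rho>0 p) (\<Omega>0 p) (pd \<Omega>0 p) 1 + \<Omega>0 p $ 2 * momE c lam (\<rho>0 p) (pd \<rho>0 p) (\<Omega>0 p) (pd \<Omega>0 p) 2)"
      using S(3)[of 2] by (simp only: sum_2)
    have E1: "momE c lam (\<rho>0 p) (pd \<rho>0 p) (\<Omega>0 p) (pd \<Omega>0 p) 1 = 
      (\<rho>0 p * pd \<Omega>0 p (1,0) $ 1 + pd \<rho>0 p (1,0) * \<Omega>0 p $ 1) + c * ((\<rho>0 p * \<Omega>0 p $ 1 * pd \<Omega>0 p (0, axis 1 1) $ 1 + (\<rho>0 p * pd \<Omega>0 p (0, axis 1 1) $ 1 + pd \<rho>0 p (0, axis 1 1) * \<Omega>0 p $ 1) * \<Omega>0 p $ 1)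
        + (\<rho>0 p * \<Omega>0 p $ 1 * pd \<Omega>0 p (0, axis 2 1) $ 2 + (\<rho>0 p * pd \<Omega>0 p (0, axis 2 1) $ 1 + pd \<rho>0 p (0, axis 2 1) * \<Omega>0 p $ 1) * \<Omega>0 p $ 2)) + lam * pd \<rho>0 p (0, axis 1 1)"
      unfolding momE_def by (simp add: sum_2)
    have E2: "momE c lam (\<rho>0 p) (pd \<rho>0 p) (\<Omega>0 p) (pd \<Omega>0 p) 2 = 
      (\<rho>0 p * pd \<Omega>0 p (1,0) $ 2 + pd \<rho>0 p (1,0) * \<Omega>0 p $ 2) + c * ((\<rho>0 p * \<Omega>0 p $ 2 * pd \<Omega>0 p (0, axis 1 1) $ 1 + (\<rho>0 p * pd \<Omega>0 p (0, axis 1 1) $ 2 + pd \<rho>0 p (0, axis 1 1) * \<Omega>0 p $ 2) * \<Omega>0 p $ 1)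
        + (\<rho>0 p * \<Omega>0 p $ 2 * pd \<Omega>0 p (0, axis 2 1) $ 2 + (\<rho>0 p * pd \<Omega>0 p (0, axis 2 1) $ 2 + pd \<rho>0 p (0, axis 2 1) * \<Omega>0 p $ 2) * \<Omega>0 p $ 2)) + lam * pd \<rho>0 p (0, axis 2 1)"
      unfolding momE_def by (simp add: sum_2)
    have M': "pd \<rho>0 p (1,0) + (\<rho>0 p * pd \<Omega>0 p (0, axis 1 1) $ 1 + pd \<rho>0 p (0, axis 1 1) * \<Omega>0 p $ 1
       + (\<rho>0 p * pd \<Omega>0 p (0, axis 2 1) $ 2 + pd \<rho>0 p (0, axis 2 1) * \<Omega>0 p $ 2)) = 0"
      using M unfolding massE_def by (simp add: sum_2)
    have r1: "\<rho>0 p * (pd \<Omega>0 p (1,0) $ 1 + c * (\<Omega>0 p $ 1 * pd \<Omega>0 p (0, axis 1 1) $ 1 + \<Omega>0 p $ 2 * pd \<Omega>0 p (0, axis 2 1) $ 1))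
      + lam * (pd \<rho>0 p (0, axis 1 1) - \<Omega>0 p $ 1 * (\<Omega>0 p $ 1 * pd \<rho>0 p (0, axis 1 1) + \<Omega>0 p $ 2 * pd \<rho>0 p (0, axis 2 1))) = 0"
      by (rule alg[OF nn o o o M' E1 E2 A1])
    have r2: "\<rho>0 p * (pd \<Omega>0 p (1,0) $ 2 + c * (\<Omega>0 p $ 1 * pd \<Omega>0 p (0, axis 1 1) $ 2 + \<Omega>0 p $ 2 * pd \<Omega>0 p (0, axis 2 1) $ 2))
      + lam * (pd \<rho>0 p (0, axis 2 1) - \<Omega>0 p $ 2 * (\<Omega>0 p $ 1 * pd \<rho>0 p (0, axis 1 1) + \<Omega>0 p $ 2 * pd \<rho>0 p (0, axis 2 1))) = 0"
      by (rule alg2[OF nn o o o M' E1 E2 A2])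
    show "\<rho>0 p * (dt (\<lambda>q. \<Omega>0 q $ i) p + c * (\<Sum>j\<in>UNIV. \<Omega>0 p $ j * dx j (\<lambda>q. \<Omega>0 q $ i) p))
        + lam * (dx i \<rho>0 p - \<Omega>0 p $ i * (\<Sum>j\<in>UNIV. \<Omega>0 p $ j * dx j \<rho>0 p)) = 0"
      using exhaust_2[of i]
    proof
      assume "i = 1" then show ?thesis using r1 by (simp add: sum_2 dtO dxO dxr)
    next
      assume "i = 2" then show ?thesis using r2 by (simp add: sum_2 dtO dxO dxr)
    qed
  qed
qed

end
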